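(* The maximal eigenvalue radius function $\rho$ associated to an admissible weight $\varphi:\mathbb{C}^n\to\mathbb{R}$ is bounded.
   Context: A $C^2$ function $\varphi:\mathbb{C}^n\to\mathbb{R}$ is plurisubharmonic if its complex Hessian $(\partial^2\varphi/\partial z_j\partial\bar z_k)$ is positive semidefinite everywhere. It is admissible if it is $C^2$, plurisubharmonic, and (a) there is $D<\infty$ with $\sup_{B(z,2r)}\Delta\varphi\le D\sup_{B(z,r)}\Delta\varphi$ for all $z\in\mathbb{C}^n$, $r>0$ ($\Delta$ the Euclidean Laplacian on $\mathbb{C}^n\cong\mathbb{R}^{2n}$, $B$ Euclidean balls), and (b) there is $c>0$ with $\inf_{z\in\mathbb{C}^n}\sup_{w\in B(z,c)}\Delta\varphi(w)>0$. Its maximal eigenvalue radius function is $\rho(z)=\sup\{r>0:\sup_{w\in B(z,r)}\Delta\varphi(w)\le r^{-2}\}$. *)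

theory Defs
  imports "HOL-Analysis.Analysis" "HOL-Library.Complex_Order"
begin

text \<open>We identify C^n with the type complex^'n (its norm is the Euclidean norm
 of R^{2n}).  Real coordinates: x_j along axis j 1, y_j along axis j i.\<close>

definition C2_fun :: "(complex^'n \<Rightarrow> real) \<Rightarrow> bool" where
  "C2_fun f \<longleftrightarrow>
     (\<exists>f' :: complex^'n \<Rightarrow> ((complex^'n) \<Rightarrow>\<^sub>L real).
      \<exists>f'' :: complex^'n \<Rightarrow> ((complex^'n) \<Rightarrow>\<^sub>L ((complex^'n) \<Rightarrow>\<^sub>L real)).
        (\<forall>z. (f has_derivative blinfun_apply (f' z)) (at z)) \<and>
        (\<forall>z. (f' has_derivative blinfun_apply (f'' z)) (at z)) \<and>
        continuous_on UNIV f'')"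

definition dirderiv :: "complex^'n \<Rightarrow> (complex^'n \<Rightarrow> real) \<Rightarrow> complex^'n \<Rightarrow> real" where
  "dirderiv v f z = deriv (\<lambda>t::real. f (z + t *\<^sub>R v)) 0"

definition dx :: "'n \<Rightarrow> (complex^'n \<Rightarrow> real) \<Rightarrow> complex^'n \<Rightarrow> real" where
  "dx j f = dirderiv (axis j 1) f"

definition dy :: "'n \<Rightarrow> (complex^'n \<Rightarrow> real) \<Rightarrow> complex^'n \<Rightarrow> real" where
  "dy j f = dirderiv (axis j \<i>) f"

text \<open>Complex Hessian entry d^2 f / dz_j d(conj z_k)
  = 1/4 (f_{x_j x_k} + f_{y_j y_k} + i (f_{x_j y_k} - f_{y_j x_k})).\<close>
definition complex_hessian :: "(complex^'n \<Rightarrow> real) \<Rightarrow> complex^'n \<Rightarrow> 'n \<Rightarrow> 'n \<Rightarrow> complex" where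
  "complex_hessian f z j k =
     (complex_of_real (dx j (dx k f) z + dy j (dy k f) z)
      + \<i> * complex_of_real (dx j (dy k f) z - dy j (dx k f) z)) / 4"

definition psd_complex :: "('n::finite \<Rightarrow> 'n \<Rightarrow> complex) \<Rightarrow> bool" where
  "psd_complex H \<longleftrightarrow>
     (\<forall>\<xi> :: complex^'n. 0 \<le> (\<Sum>j\<in>UNIV. \<Sum>k\<in>UNIV. cnj (\<xi> $ j) * H j k * \<xi> $ k))"

definition plurisubharmonic :: "(complex^'n::finite \<Rightarrow> real) \<Rightarrow> bool" where
  "plurisubharmonic f \<longleftrightarrow> C2_fun f \<and> (\<forall>z. psd_complex (complex_hessian f z))"

definition laplacian :: "(complex^'n::finite \<Rightarrow> real) \<Rightarrow> complex^'n \<Rightarrow> real" where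
  "laplacian f z = (\<Sum>j\<in>UNIV. dx j (dx j f) z + dy j (dy j f) z)"

definition admissible :: "(complex^'n::finite \<Rightarrow> real) \<Rightarrow> bool" where
  "admissible f \<longleftrightarrow> C2_fun f \<and> plurisubharmonic f \<and>
     (\<exists>D::real. \<forall>z r. r > 0 \<longrightarrow>
        (SUP w\<in>ball z (2*r). laplacian f w) \<le> D * (SUP w\<in>ball z r. laplacian f w)) \<and>
     (\<exists>c>0. (INF z. SUP w\<in>ball z c. laplacian f w) > 0)"

text \<open>Maximal eigenvalue radius function, valued in the extended reals
  so that the supremum is always meaningful.\<close>
definition max_eig_radius :: "(complex^'n::finite \<Rightarrow> real) \<Rightarrow> complex^'n \<Rightarrow> ereal" where
  "max_eig_radius f z =
     Sup (ereal ` {r::real. r > 0 \<and> (SUP w\<in>ball z r. laplacian f w) \<le> 1 / r^2})"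

end

theory Submission imports Defs begin

lemma dirderiv_eq:
  fixes f :: "complex^'n \<Rightarrow> real"
  assumes "(f has_derivative L) (at z)"
  shows "dirderiv v f z = L v"
proof -
  have lin: "linear L" using assms has_derivative_linear by blast
  have "((\<lambda>t::real. z + t *\<^sub>R v) has_derivative (\<lambda>t. t *\<^sub>R v)) (at 0)"
    by (auto intro!: derivative_eq_intros)
  moreover have "(f has_derivative L) (at (z + 0 *\<^sub>R v))" using assms by simp
  ultimately have "((\<lambda>t::real. f (z + t *\<^sub>R v)) has_derivative (\<lambda>t. L (t *\<^sub>R v))) (at 0)"
    using diff_chain_at[of "\<lambda>t::real. z + t *\<^sub>R v" "\<lambda>t. t *\<^sub>R v" 0 f L]
    by (simp add: o_def)
  moreover have "(\<lambda>t. L (t *\<^sub>R v)) = (*) (L v)"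
    using lin by (auto simp: linear_scale mult.commute)
  ultimately have "((\<lambda>t::real. f (z + t *\<^sub>R v)) has_field_derivative L v) (at 0)"
    by (simp add: has_field_derivative_def)
  then show ?thesis unfolding dirderiv_def by (rule DERIV_imp_deriv)
qed

lemma lap_formula:
  fixes f :: "complex^'n::finite \<Rightarrow> real"
  assumes d1: "\<And>z. (f has_derivative blinfun_apply (f' z)) (at z)"
    and d2: "\<And>z. (f' has_derivative blinfun_apply (f'' z)) (at z)"
  shows "dirderiv u (dirderiv v f) z = f'' z u v"
proof -
  have e: "dirderiv v f = (\<lambda>z. f' z v)"
    using dirderiv_eq[OF d1] by auto
  have "((\<lambda>z. blinfun_apply (f' z) v) has_derivative (\<lambda>h. f'' z h v)) (at z)"
    using blinfun.FDERIV[OF d2 has_derivative_const[of v]] by simp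
  then show ?thesis unfolding e by (rule dirderiv_eq)
qed

lemma lap_cont:
  fixes f :: "complex^'n::finite \<Rightarrow> real"
  assumes "C2_fun f"
  shows "continuous_on UNIV (laplacian f)"
proof -
  obtain f' f'' where d1: "\<And>z. (f has_derivative blinfun_apply (f' z)) (at z)"
    and d2: "\<And>z. (f' has_derivative blinfun_apply (f'' z)) (at z)"
    and c: "continuous_on UNIV f''"
    using assms unfolding C2_fun_def by blast
  have "laplacian f = (\<lambda>z. \<Sum>j\<in>UNIV. f'' z (axis j 1) (axis j 1) + f'' z (axis j \<i>) (axis j \<i>))"
    by (auto simp: laplacian_def dx_def dy_def lap_formula[OF d1 d2])
  moreover have "continuous_on UNIV (\<lambda>z. \<Sum>j\<in>UNIV. f'' z (axis j 1) (axis j 1) + f'' z (axis j \<i>) (axis j \<i>))"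
    by (intro continuous_intros blinfun.continuous_on c)
  ultimately show ?thesis by simp
qed

lemma dsum_helper: "(\<Sum>a\<in>(UNIV::'n::finite set). \<Sum>b\<in>UNIV. if a = j then if b = j then (X::complex) else 0 else 0) = X"
proof -
  have "\<And>a. (\<Sum>b\<in>(UNIV::'n set). if a = j then if b = j then X else 0 else 0) = (if a = j then X else 0)"
    by simp
  then show ?thesis by simp
qed

lemma lap_nonneg:
  fixes f :: "complex^'n::finite \<Rightarrow> real"
  assumes "plurisubharmonic f"
  shows "0 \<le> laplacian f z"
proof -
  have "0 \<le> dx j (dx j f) z + dy j (dy j f) z" for j
  proof -
    have "psd_complex (complex_hessian f z)" using assms plurisubharmonic_def by blast
    then have "0 \<le> (\<Sum>a\<in>UNIV. \<Sum>b\<in>UNIV. cnj (axis j (1::complex) $ a) * complex_hessian f z a b * axis j 1 $ b)"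
      unfolding psd_complex_def by blast
    also have "\<dots> = complex_hessian f z j j"
      by (simp add: axis_def vec_lambda_beta mult_ac if_distrib[where f=cnj] if_distrib[where f="\<lambda>x. x * _"] if_distrib[where f="\<lambda>x. _ * x"] sum.delta dsum_helper cong: if_cong)
    finally have "0 \<le> Re (complex_hessian f z j j)" by (simp add: less_eq_complex_def)
    then show ?thesis by (simp add: complex_hessian_def)
  qed
  then show ?thesis unfolding laplacian_def by (simp add: sum_nonneg)
qed

lemma lap_bdd:
  fixes f :: "complex^'n::finite \<Rightarrow> real"
  assumes "C2_fun f"
  shows "bdd_above (laplacian f ` ball z r)"
proof -
  have "compact (laplacian f ` cball z r)"
    by (rule compact_continuous_image[OF continuous_on_subset[OF lap_cont[OF assms]]]) auto
  then have "bdd_above (laplacian f ` cball z r)"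
    by (intro bounded_imp_bdd_above compact_imp_bounded)
  then show ?thesis by (rule bdd_above_mono) auto
qed

theorem mainTheorem12:
  fixes \<phi> :: "complex^'n::finite \<Rightarrow> real"
  assumes "admissible \<phi>"
  shows "\<exists>M::real. \<forall>z. max_eig_radius \<phi> z \<le> ereal M"
proof -
  have C2: "C2_fun \<phi>" and psh: "plurisubharmonic \<phi>" using assms admissible_def by auto
  obtain c where c: "c > 0" and a: "(INF z. SUP w\<in>ball z c. laplacian \<phi> w) > 0"
    using assms admissible_def by blast
  define a where "a = (INF z. SUP w\<in>ball z c. laplacian \<phi> w)"
  have a0: "a > 0" using a a_def by simp
  have Sge: "laplacian \<phi> z \<le> (SUP w\<in>ball z c. laplacian \<phi> w)" for z
    using c by (intro cSUP_upper lap_bdd C2) auto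
  have "bdd_below (range (\<lambda>z. SUP w\<in>ball z c. laplacian \<phi> w))"
    by (rule bdd_belowI[of _ 0]) (use Sge lap_nonneg[OF psh] order_trans in blast)
  then have aS: "a \<le> (SUP w\<in>ball z c. laplacian \<phi> w)" for z
    unfolding a_def by (rule cINF_lower) auto
  show ?thesis
  proof (intro exI allI)
    fix z
    show "max_eig_radius \<phi> z \<le> ereal (c + 1 + 1/a)"
      unfolding max_eig_radius_def
    proof (rule Sup_least, clarify)
      fix r :: real
      assume r: "r > 0" "(SUP w\<in>ball z r. laplacian \<phi> w) \<le> 1 / r^2"
      show "ereal r \<le> ereal (c + 1 + 1/a)"
      proof (cases "r \<le> c + 1")
        case True have "0 \<le> 1/a" using a0 by simp
        then show ?thesis using True by (simp del: divide_nonneg_nonneg zero_le_divide_1_iff)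
      next
        case False
        have "(SUP w\<in>ball z c. laplacian \<phi> w) \<le> (SUP w\<in>ball z r. laplacian \<phi> w)"
          using False c by (intro cSUP_subset_mono lap_bdd C2) auto
        then have "a \<le> 1 / r^2" using aS[of z] r by linarith
        then have "a * r^2 \<le> 1" using r by (simp add: field_simps)
        moreover have "r \<le> r^2" using False c by (simp add: power2_eq_square)
        ultimately have "a * r \<le> 1" using a0 by (smt (verit) mult_left_mono)
        then have "r \<le> 1/a" using a0 by (simp add: field_simps)
        then show ?thesis using c by simp
      qed
    qed
  qed
qed

end
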